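(* Assume the Setup and Matrix Notation below. Fix $i,j\in I$ and let $Z=\begin{pmatrix}P&Q\\R&S\end{pmatrix}$ be an $r\times r$ matrix over $\mathcal O_X(U_i\cap U_j)$, with $P$ of size $(r-2)\times(r-2)$, $Q$ of size $(r-2)\times 2$, $R$ of size $2\times(r-2)$, $S$ of size $2\times 2$. Then $M_i=ZM_j$ if and only if: (i) $P=P_{ij}=\Delta_{t_i}T'_i\Delta'_{t_j}$; (ii) $R=T''_i\Delta'_{t_j}$; (iii) $Q\,(f_j,g_j)^T=(-1)^{t_j}\,\Delta_{t_i}T'_i\,\mathbf s_j$; (iv) $S\,(f_j,g_j)^T=(-1)^{t_j}s_{jt_i}\,(f_i,g_i)^T$ (this holds in particular for $S=(-1)^{t_j}s_{jt_i}A_{ij}$). Moreover, such a matrix $Z$ always exists, and can be taken with $S=(-1)^{t_j}s_{jt_i}A_{ij}$; for any $Z$ satisfying (i)–(iv) with $S=(-1)^{t_j}s_{jt_i}A_{ij}$, one has $\det S=(-1)^{t_i}s_{jt_i}h_{ij}$ and $\det Z=h_{ij}$.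
   Context: Setup. $k$ is an algebraically closed field, $X$ a smooth irreducible algebraic variety over $k$, $Y\subset X$ a local complete intersection subscheme of codimension two with ideal sheaf $\mathcal J$ and normal bundle $N$, $L$ a line bundle on $X$, $r\ge 2$ an integer, and $s_1,\dots,s_{r-1}$ global sections generating $\bigwedge^2N\otimes L^*|_Y$. A bar denotes the class modulo the ideal of $Y$. $\{U_i\}_{i\in I}$ is a cover of $X$ by affine open sets such that: (a) $L|_{U_i}$ is trivial, with transition functions $h_{ij}\in\mathcal O_X(U_i\cap U_j)^\times$, $h_{ij}h_{jk}=h_{ik}$; (b) $f_i,g_i\in\mathcal O_X(U_i)$ generate $\mathcal J(U_i)$ (with $f_i=1,g_i=0$ if $Y\cap U_i=\emptyset$), and for every affine open $V\subseteq U_i$ and $u,v\in\mathcal O_X(V)$ with $uf_i=vg_i$ there is $w\in\mathcal O_X(V)$ with $u=wg_i$, $v=wf_i$; (c) for all $i,j$, $A_{ij}$ is a $2\times2$ matrix over $\mathcal O_X(U_i\cap U_j)$ with $(f_i,g_i)^T=A_{ij}(f_j,g_j)^T$; (d) $s_{it}\in\mathcal O_X(U_i)$ ($t=1,\dots,r-1$) satisfy $\bar s_{it}=\frac{\det\bar A_{ij}}{\bar h_{ij}}\bar s_{jt}$ on $Y\cap U_i\cap U_j$ (they represent $s_t$ locally); (e) there are indices $t_i\in\{1,\dots,r-1\}$ with $s_{it_i}=(-1)^{t_i}$, and for all $i,j$ the function $s_{jt_i}$ is a unit on $U_i\cap U_j$ and $\det A_{ij}=(-1)^{t_i}h_{ij}/s_{jt_i}$.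 Matrix Notation. $\Delta_t$ is the identity matrix (size clear from context) with its $t$-th row removed and $\Delta'_t$ its transpose; thus $\Delta_tM$ is $M$ without its $t$-th row and $M\Delta'_t$ is $M$ without its $t$-th column. $\mathbf s_i=(s_{i1},\dots,s_{i,r-1})^T$. $T'_i$ is the $(r-1)\times(r-1)$ matrix equal to the identity except for its $t_i$-th column, whose $t_i$-th entry is $1$ and whose $t$-th entry is $-(-1)^{t_i}s_{it}$ for $t\ne t_i$. $T''_i$ is the $2\times(r-1)$ matrix whose $t_i$-th column is $(f_i,g_i)^T$ and whose other columns are zero. $M_i=\begin{pmatrix}\Delta_{t_i}T'_i\\ T''_i\end{pmatrix}$ (an $r\times(r-1)$ matrix). $P_{ij}=\Delta_{t_i}T'_i\Delta'_{t_j}$. *)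

theory Defs
  imports "Jordan_Normal_Form.Determinant"
begin

text \<open>The paper's indices t are 1-based (t in {1..r-1}); the t-th row/column of the
  paper is row/column t-1 here.  A sequence s_1,...,s_{r-1} is a function
  s :: nat => 'a evaluated at 1..r-1.\<close>

text \<open>Delta_t: the n x n identity matrix with its t-th row removed ((n-1) x n).\<close>
definition delta_mat :: "nat \<Rightarrow> nat \<Rightarrow> 'a::{zero,one} mat" where
  "delta_mat n t = mat (n - 1) n
     (\<lambda>(a, b). if b = (if a < t - 1 then a else Suc a) then 1 else 0)"

definition delta'_mat :: "nat \<Rightarrow> nat \<Rightarrow> 'a::{zero,one} mat" where
  "delta'_mat n t = transpose_mat (delta_mat n t)"

definition svec :: "nat \<Rightarrow> (nat \<Rightarrow> 'a) \<Rightarrow> 'a mat" where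
  "svec r s = mat (r - 1) 1 (\<lambda>(a, _). s (Suc a))"

definition col2 :: "'a \<Rightarrow> 'a \<Rightarrow> 'a mat" where
  "col2 f g = mat 2 1 (\<lambda>(a, _). if a = 0 then f else g)"

definition Tprime :: "nat \<Rightarrow> (nat \<Rightarrow> 'a::comm_ring_1) \<Rightarrow> nat \<Rightarrow> 'a mat" where
  "Tprime r s t = mat (r - 1) (r - 1)
     (\<lambda>(a, b). if b = t - 1
               then (if a = t - 1 then 1 else - ((-1) ^ t * s (Suc a)))
               else (if a = b then 1 else 0))"

definition Tsecond :: "nat \<Rightarrow> 'a::zero \<Rightarrow> 'a \<Rightarrow> nat \<Rightarrow> 'a mat" where
  "Tsecond r f g t = mat 2 (r - 1)
     (\<lambda>(a, b). if b = t - 1 then (if a = 0 then f else g) else 0)"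

definition Mmat :: "nat \<Rightarrow> (nat \<Rightarrow> 'a::comm_ring_1) \<Rightarrow> nat \<Rightarrow> 'a \<Rightarrow> 'a \<Rightarrow> 'a mat" where
  "Mmat r s t f g = (delta_mat (r - 1) t * Tprime r s t) @\<^sub>r Tsecond r f g t"

end

theory Submission
  imports Defs
begin


definition sk :: "nat \<Rightarrow> nat \<Rightarrow> nat" where "sk p i = (if i < p then i else Suc i)"

lemma neg1_par: "even (x + y) \<Longrightarrow> (-1::'a::comm_ring_1)^x = (-1)^y"
  by (metis even_add neg_one_even_power neg_one_odd_power)

lemma det1: assumes "(A::'a::comm_ring_1 mat) \<in> carrier_mat 1 1"
  shows "det A = A $$ (0,0)"
proof -
  have "det A = (\<Sum>i<1. A $$ (i,0) * cofactor A i 0)"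
    by (rule laplace_expansion_column[OF assms], simp)
  also have "\<dots> = A $$ (0,0)"
  proof -
    have "mat_delete A 0 0 \<in> carrier_mat 0 0" using mat_delete_carrier[OF assms] by simp
    then show ?thesis by (simp add: cofactor_def)
  qed
  finally show ?thesis .
qed

lemma det2: assumes "(A::'a::comm_ring_1 mat) \<in> carrier_mat 2 2"
  shows "det A = A $$ (0,0) * A $$ (1,1) - A $$ (0,1) * A $$ (1,0)"
proof -
  have "det A = (\<Sum>i<2. A $$ (i,0) * cofactor A i 0)"
    by (rule laplace_expansion_column[OF assms], simp)
  also have "\<dots> = A $$ (0,0) * det (mat_delete A 0 0) - A $$ (1,0) * det (mat_delete A 1 0)"
    by (simp add: cofactor_def numeral_2_eq_2)
  also have "det (mat_delete A 0 0) = A $$ (1,1)"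
    using assms by (subst det1) (auto simp: mat_delete_def numeral_2_eq_2)
  also have "det (mat_delete A 1 0) = A $$ (0,1)"
    using assms by (subst det1) (auto simp: mat_delete_def numeral_2_eq_2)
  finally show ?thesis by (simp add: algebra_simps)
qed

lemma det3: assumes "(A::'a::comm_ring_1 mat) \<in> carrier_mat 3 3"
  shows "det A = A $$ (0,0) * (A $$ (1,1) * A $$ (2,2) - A $$ (1,2) * A $$ (2,1))
     - A $$ (1,0) * (A $$ (0,1) * A $$ (2,2) - A $$ (0,2) * A $$ (2,1))
     + A $$ (2,0) * (A $$ (0,1) * A $$ (1,2) - A $$ (0,2) * A $$ (1,1))"
proof -
  have "det A = (\<Sum>i<3. A $$ (i,0) * cofactor A i 0)"
    by (rule laplace_expansion_column[OF assms], simp)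
  also have "\<dots> = A $$ (0,0) * det (mat_delete A 0 0) - A $$ (1,0) * det (mat_delete A 1 0)
     + A $$ (2,0) * det (mat_delete A 2 0)"
    by (simp add: cofactor_def numeral_3_eq_3 numeral_2_eq_2)
  also have "det (mat_delete A 0 0) = A $$ (1,1) * A $$ (2,2) - A $$ (1,2) * A $$ (2,1)"
    using assms by (subst det2) (auto simp: mat_delete_def numeral_2_eq_2)
  also have "det (mat_delete A 1 0) = A $$ (0,1) * A $$ (2,2) - A $$ (0,2) * A $$ (2,1)"
    using assms by (subst det2) (auto simp: mat_delete_def numeral_2_eq_2)
  also have "det (mat_delete A 2 0) = A $$ (0,1) * A $$ (1,2) - A $$ (0,2) * A $$ (1,1)"
    using assms by (subst det2) (auto simp: mat_delete_def numeral_2_eq_2)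
  finally show ?thesis by (simp add: algebra_simps)
qed

definition dl :: "nat \<Rightarrow> nat \<Rightarrow> nat" where "dl p b = (if b < p then b else b - 1)"

definition Tf :: "nat \<Rightarrow> (nat \<Rightarrow> 'a::comm_ring_1) \<Rightarrow> nat \<Rightarrow> nat \<Rightarrow> 'a" where
 "Tf p \<alpha> a b = (if b = p then (if a = p then 1 else \<alpha> a) else (if a = b then 1 else 0))"

definition Fm :: "nat \<Rightarrow> nat \<Rightarrow> nat \<Rightarrow> (nat \<Rightarrow> 'a::comm_ring_1) \<Rightarrow> (nat \<Rightarrow> nat \<Rightarrow> 'a)
   \<Rightarrow> (nat \<Rightarrow> nat \<Rightarrow> 'a) \<Rightarrow> 'a \<Rightarrow> 'a \<Rightarrow> 'a mat" where
 "Fm n p q \<alpha> Q S f g = mat (Suc n) (Suc n) (\<lambda>(i,j). if i < n - 1 then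
     (if j < n - 1 then Tf p \<alpha> (sk p i) (sk q j) else Q i (j - (n - 1)))
   else (if j < n - 1 then (if sk q j = p then (if i = n - 1 then f else g) else 0)
     else S (i - (n - 1)) (j - (n - 1))))"

definition D3 :: "'a::comm_ring_1 \<Rightarrow> 'a \<Rightarrow> 'a \<Rightarrow> 'a \<Rightarrow> 'a \<Rightarrow> (nat \<Rightarrow> nat \<Rightarrow> 'a) \<Rightarrow> 'a" where
 "D3 a x y f g S = a*(S 0 0 * S 1 1 - S 0 1 * S 1 0) - f*(x * S 1 1 - y * S 1 0) + g*(x * S 0 1 - y * S 0 0)"

lemma Fm_carrier: "Fm n p q \<alpha> Q S f g \<in> carrier_mat (Suc n) (Suc n)"
  unfolding Fm_def by simp

lemma sk_sk: "b \<noteq> p \<Longrightarrow> sk p (sk (dl p b) i) = sk b (sk (dl b p) i)"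
  unfolding sk_def dl_def by auto

lemma sk_inj: "(sk b x = sk b y) = (x = y)"
  unfolding sk_def by auto

lemma sk_eq_p: "b \<noteq> p \<Longrightarrow> (sk b x = p) = (x = dl b p)"
  unfolding sk_def dl_def by auto

lemma Tf_sk: "b \<noteq> p \<Longrightarrow> Tf p \<alpha> (sk b x) (sk b y) = Tf (dl b p) (\<lambda>a. \<alpha> (sk b a)) x y"
  unfolding Tf_def by (simp add: sk_inj sk_eq_p)

lemma sk_lt: "ia < n - 1 \<Longrightarrow> 2 \<le> n \<Longrightarrow> (sk ia i < n - 1) = (i < n - 2)"
  unfolding sk_def by auto

lemma sk_ge: "ia < n - 1 \<Longrightarrow> 2 \<le> n \<Longrightarrow> \<not> i < n - 2 \<Longrightarrow> sk ia i - (n - 1) = i - (n - 2) \<and> sk ia i = Suc i"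
  unfolding sk_def by auto

lemma dl_lt: "b < n \<Longrightarrow> b \<noteq> p \<Longrightarrow> p < n \<Longrightarrow> dl p b < n - 1"
  unfolding dl_def by auto

lemma sk_dl: "b \<noteq> q \<Longrightarrow> sk q (dl q b) = b"
  unfolding sk_def dl_def by auto

lemma Fm_unit_col:
  assumes "b < n" "b \<noteq> p" "b \<noteq> q" "p < n" "q < n" "i < Suc n"
  shows "Fm n p q \<alpha> Q S f g $$ (i, dl q b) = (if i = dl p b then 1 else 0)"
proof -
  have jb: "dl q b < n - 1" using assms dl_lt by blast
  have ia: "dl p b < n - 1" using assms dl_lt by blast
  have "Fm n p q \<alpha> Q S f g $$ (i, dl q b) = (if i < n - 1 then Tf p \<alpha> (sk p i) b
     else (if b = p then (if i = n - 1 then f else g) else 0))"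
    using assms jb unfolding Fm_def by (simp add: sk_dl)
  also have "\<dots> = (if i = dl p b then 1 else 0)"
    using assms ia unfolding Tf_def by (auto simp: sk_def dl_def)
  finally show ?thesis .
qed

lemma Fm_delete:
  assumes "b < n" "b \<noteq> p" "b \<noteq> q" "p < n" "q < n"
  shows "mat_delete (Fm n p q \<alpha> Q S f g) (dl p b) (dl q b)
     = Fm (n - 1) (dl b p) (dl b q) (\<lambda>a. \<alpha> (sk b a)) (\<lambda>i j. Q (sk (dl p b) i) j) S f g"
proof (rule eq_matI)
  have n2: "2 \<le> n" using assms by auto
  have jb: "dl q b < n - 1" using assms dl_lt by blast
  have ia: "dl p b < n - 1" using assms dl_lt by blast
  fix i j assume i: "i < dim_row (Fm (n - 1) (dl b p) (dl b q) (\<lambda>a. \<alpha> (sk b a)) (\<lambda>i j. Q (sk (dl p b) i) j) S f g)"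
    and j: "j < dim_col (Fm (n - 1) (dl b p) (dl b q) (\<lambda>a. \<alpha> (sk b a)) (\<lambda>i j. Q (sk (dl p b) i) j) S f g)"
  have i': "i < n" and j': "j < n" using i j n2 by (auto simp: Fm_def)
  have "mat_delete (Fm n p q \<alpha> Q S f g) (dl p b) (dl q b) $$ (i, j)
     = Fm n p q \<alpha> Q S f g $$ (sk (dl p b) i, sk (dl q b) j)"
    using i' j' unfolding mat_delete_def sk_def by (simp add: Fm_def)
  also have "\<dots> = (if sk (dl p b) i < n - 1 then
     (if sk (dl q b) j < n - 1 then Tf p \<alpha> (sk p (sk (dl p b) i)) (sk q (sk (dl q b) j)) else Q (sk (dl p b) i) (sk (dl q b) j - (n - 1)))
   else (if sk (dl q b) j < n - 1 then (if sk q (sk (dl q b) j) = p then (if sk (dl p b) i = n - 1 then f else g) else 0)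
     else S (sk (dl p b) i - (n - 1)) (sk (dl q b) j - (n - 1))))"
    using i' j' unfolding Fm_def by (simp add: sk_def)
  also have "\<dots> = Fm (n - 1) (dl b p) (dl b q) (\<lambda>a. \<alpha> (sk b a)) (\<lambda>i j. Q (sk (dl p b) i) j) S f g $$ (i, j)"
  proof -
    have e: "Fm (n - 1) (dl b p) (dl b q) (\<lambda>a. \<alpha> (sk b a)) (\<lambda>i j. Q (sk (dl p b) i) j) S f g $$ (i, j)
      = (if i < n - 2 then
     (if j < n - 2 then Tf (dl b p) (\<lambda>a. \<alpha> (sk b a)) (sk (dl b p) i) (sk (dl b q) j) else Q (sk (dl p b) i) (j - (n - 2)))
   else (if j < n - 2 then (if sk (dl b q) j = dl b p then (if i = n - 2 then f else g) else 0)
     else S (i - (n - 2)) (j - (n - 2))))"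
      using i' j' n2 unfolding Fm_def by (simp add: numeral_2_eq_2 diff_diff_add)
    show ?thesis unfolding e
      using sk_lt[OF ia n2, of i] sk_lt[OF jb n2, of j] sk_ge[OF ia n2, of i] sk_ge[OF jb n2, of j]
        sk_sk[of b p i] sk_sk[of b q j] assms Tf_sk[of b p \<alpha>] sk_eq_p[of b p]
      by (auto simp del: One_nat_def)
  qed
  finally show "mat_delete (Fm n p q \<alpha> Q S f g) (dl p b) (dl q b) $$ (i, j) =
        Fm (n - 1) (dl b p) (dl b q) (\<lambda>a. \<alpha> (sk b a)) (\<lambda>i j. Q (sk (dl p b) i) j) S f g $$ (i, j)" .
qed (use assms in \<open>auto simp: mat_delete_def Fm_def\<close>)

lemma Fm_det:
  "p < n \<Longrightarrow> q < n \<Longrightarrow> det (Fm n p q \<alpha> Q S f g) = (if p = q then S 0 0 * S 1 1 - S 0 1 * S 1 0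
     else (-1)^(p+q+1) * D3 (\<alpha> q) (Q (dl p q) 0) (Q (dl p q) 1) f g S)"
proof (induction n arbitrary: p q \<alpha> Q)
  case 0
  then show ?case by simp
next
  case (Suc m)
  show ?case
  proof (cases "(p = q \<and> m = 0) \<or> (p \<noteq> q \<and> m = 1)")
    case True
    then show ?thesis
    proof
      assume a: "p = q \<and> m = 0"
      then have "det (Fm (Suc m) p q \<alpha> Q S f g) = S 0 0 * S 1 1 - S 0 1 * S 1 0"
        using Suc.prems by (subst det2) (auto simp: Fm_def numeral_2_eq_2)
      then show ?thesis using a by simp
    next
      assume a: "p \<noteq> q \<and> m = 1"
      then have pq: "(p = 0 \<and> q = 1) \<or> (p = 1 \<and> q = 0)" using Suc.prems by auto
      let ?F = "Fm (Suc m) p q \<alpha> Q S f g"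
      have m2: "Suc m = 2" using a by simp
      have C: "?F \<in> carrier_mat 3 3" using Fm_carrier[of "Suc m" p q \<alpha> Q S f g] a by (simp add: numeral_3_eq_3)
      have d: "dl p q = 0" using pq unfolding dl_def by auto
      have e: "?F $$ (0,0) = \<alpha> q" "?F $$ (0,1) = Q 0 0" "?F $$ (0,2) = Q 0 1"
        "?F $$ (1,0) = f" "?F $$ (1,1) = S 0 0" "?F $$ (1,2) = S 0 1"
        "?F $$ (2,0) = g" "?F $$ (2,1) = S 1 0" "?F $$ (2,2) = S 1 1"
        using pq unfolding m2 Fm_def Tf_def sk_def by auto
      have sg: "(-1::'a)^(p+q+1) = 1" using pq by auto
      have "det (Fm (Suc m) p q \<alpha> Q S f g) = (-1)^(p+q+1) * D3 (\<alpha> q) (Q (dl p q) 0) (Q (dl p q) 1) f g S"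
        unfolding det3[OF C] e d sg D3_def by (simp add: algebra_simps)
      then show ?thesis using a by simp
    qed
  next
    case False
    define b where "b = (if 0 \<noteq> p \<and> 0 \<noteq> q then 0 else if 1 \<noteq> p \<and> 1 \<noteq> q then 1 else (2::nat))"
    have m1: "1 \<le> m" using False Suc.prems by (cases "p = q") auto
    have m2: "p \<noteq> q \<Longrightarrow> 2 \<le> m" using False m1 by auto
    have bb: "b < Suc m \<and> b \<noteq> p \<and> b \<noteq> q"
    proof (cases "0 \<noteq> p \<and> 0 \<noteq> q")
      case True then show ?thesis unfolding b_def by simp
    next
      case F1: False
      show ?thesis
      proof (cases "1 \<noteq> p \<and> 1 \<noteq> q")
        case True then show ?thesis unfolding b_def using F1 m1 by simp
      next
        case False
        then have "p \<noteq> q" "p \<le> 1" "q \<le> 1" using F1 by auto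
        then show ?thesis unfolding b_def using F1 False m2 by simp
      qed
    qed
    have b: "b < Suc m" "b \<noteq> p" "b \<noteq> q" using bb by auto
    let ?F = "Fm (Suc m) p q \<alpha> Q S f g"
    have "det ?F = (\<Sum>i<Suc (Suc m). ?F $$ (i, dl q b) * cofactor ?F i (dl q b))"
      by (rule laplace_expansion_column[OF Fm_carrier]) (use dl_lt[OF b(1,3) Suc.prems(2)] in auto)
    also have "\<dots> = (\<Sum>i<Suc (Suc m). if i = dl p b then cofactor ?F i (dl q b) else 0)"
    proof (rule sum.cong)
      fix i assume "i \<in> {..<Suc (Suc m)}"
      then have "?F $$ (i, dl q b) = (if i = dl p b then 1 else 0)"
        using Fm_unit_col[OF b Suc.prems, of i \<alpha> Q S f g] by simp
      then show "?F $$ (i, dl q b) * cofactor ?F i (dl q b) = (if i = dl p b then cofactor ?F i (dl q b) else 0)"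
        by simp
    qed simp
    also have "\<dots> = cofactor ?F (dl p b) (dl q b)"
      using dl_lt[OF b(1,2) Suc.prems(1)] by (simp add: sum.delta)
    also have "\<dots> = (-1)^(dl p b + dl q b) * det (Fm m (dl b p) (dl b q) (\<lambda>a. \<alpha> (sk b a)) (\<lambda>i j. Q (sk (dl p b) i) j) S f g)"
    proof -
      have "mat_delete ?F (dl p b) (dl q b) = Fm m (dl b p) (dl b q) (\<lambda>a. \<alpha> (sk b a)) (\<lambda>i j. Q (sk (dl p b) i) j) S f g"
        using Fm_delete[OF b Suc.prems, of \<alpha> Q S f g] by (simp only: diff_Suc_1)
      then show ?thesis unfolding cofactor_def by (simp only:)
    qed
    also have "\<dots> = (if p = q then S 0 0 * S 1 1 - S 0 1 * S 1 0
     else (-1)^(p+q+1) * D3 (\<alpha> q) (Q (dl p q) 0) (Q (dl p q) 1) f g S)"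
    proof -
      have lt: "dl b p < m" "dl b q < m" using b Suc.prems unfolding dl_def by auto
      have eqv: "(dl b p = dl b q) = (p = q)" using b unfolding dl_def by auto
      have sq: "sk b (dl b q) = q" using b(3) sk_dl[of q b] by simp
      have sq2: "p \<noteq> q \<Longrightarrow> sk (dl p b) (dl (dl b p) (dl b q)) = dl p q"
        using b unfolding sk_def dl_def by auto
      have par_eq: "dl p b + dl q b + (dl b p + dl b q + 1) + (p + q + 1) = 2*(b+p+q)"
        using b unfolding dl_def by (auto split: if_splits)
      have par: "even (dl p b + dl q b + (dl b p + dl b q + 1) + (p + q + 1))"
        unfolding par_eq by simp
      have sg: "(-1::'a)^(dl p b + dl q b) * (-1)^(dl b p + dl b q + 1) = (-1)^(p+q+1)"
      proof -
        have "(-1::'a)^(dl p b + dl q b + (dl b p + dl b q + 1)) = (-1)^(p+q+1)" using neg1_par[OF par] .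
        then show ?thesis by (metis power_add)
      qed
      show ?thesis
      proof (cases "p = q")
        case True
        have "(-1::'a)^(dl p b + dl q b) = 1" using True neg1_par[of "dl p b + dl q b" 0] by simp
        then show ?thesis unfolding Suc.IH[OF lt] eqv sq using True by simp
      next
        case False
        have X: "det (Fm m (dl b p) (dl b q) (\<lambda>a. \<alpha> (sk b a)) (\<lambda>i j. Q (sk (dl p b) i) j) S f g) = (-1)^(dl b p + dl b q + 1) * D3 (\<alpha> q) (Q (dl p q) 0) (Q (dl p q) 1) f g S"
          unfolding Suc.IH[OF lt] eqv sq sq2[OF False] if_not_P[OF False] ..
        show ?thesis unfolding X if_not_P[OF False] mult.assoc[symmetric] sg ..
      qed
    qed
    finally show ?thesis .
  qed
qed


lemma sum_single: "j < (n::nat) \<Longrightarrow> (\<Sum>k<n. (if k = j then 1 else 0) * (x k :: 'a::comm_ring_1)) = x j"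
proof -
  assume j: "j < n"
  have "(\<Sum>k<n. (if k = j then 1 else 0) * x k) = (\<Sum>k<n. if k = j then x k else 0)"
    by (rule sum.cong) auto
  also have "\<dots> = x j" using j by (subst sum.delta) auto
  finally show ?thesis .
qed

lemma delta_mult:
  assumes X: "(X :: 'a::comm_ring_1 mat) \<in> carrier_mat n c" and t: "1 \<le> t" "t \<le> n"
  shows "delta_mat n t * X = mat (n - 1) c (\<lambda>(a,b). X $$ (sk (t-1) a, b))"
proof (rule eq_matI)
  fix a b assume a: "a < dim_row (mat (n - 1) c (\<lambda>(a,b). X $$ (sk (t-1) a, b)))"
    and b: "b < dim_col (mat (n - 1) c (\<lambda>(a,b). X $$ (sk (t-1) a, b)))"
  have "(delta_mat n t * X) $$ (a,b) = (\<Sum>k<n. (if k = sk (t-1) a then 1 else 0) * X $$ (k,b))"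
    using a b X unfolding delta_mat_def
    by (auto simp: scalar_prod_def sk_def atLeast0LessThan intro!: sum.cong)
  also have "\<dots> = X $$ (sk (t-1) a, b)"
    by (rule sum_single) (use a t in \<open>auto simp: sk_def\<close>)
  finally show "(delta_mat n t * X) $$ (a,b) = mat (n - 1) c (\<lambda>(a,b). X $$ (sk (t-1) a, b)) $$ (a,b)"
    using a b by simp
qed (use X in \<open>auto simp: delta_mat_def\<close>)

lemma mult_delta':
  assumes X: "(X :: 'a::comm_ring_1 mat) \<in> carrier_mat c n" and t: "1 \<le> t" "t \<le> n"
  shows "X * delta'_mat n t = mat c (n - 1) (\<lambda>(a,b). X $$ (a, sk (t-1) b))"
proof (rule eq_matI)
  fix a b assume a: "a < dim_row (mat c (n - 1) (\<lambda>(a,b). X $$ (a, sk (t-1) b)))"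
    and b: "b < dim_col (mat c (n - 1) (\<lambda>(a,b). X $$ (a, sk (t-1) b)))"
  have "(X * delta'_mat n t) $$ (a,b) = (\<Sum>k<n. (if k = sk (t-1) b then 1 else 0) * X $$ (a,k))"
    using a b X unfolding delta'_mat_def delta_mat_def
    by (auto simp: scalar_prod_def sk_def atLeast0LessThan mult.commute intro!: sum.cong)
  also have "\<dots> = X $$ (a, sk (t-1) b)"
    by (rule sum_single) (use b t in \<open>auto simp: sk_def\<close>)
  finally show "(X * delta'_mat n t) $$ (a,b) = mat c (n - 1) (\<lambda>(a,b). X $$ (a, sk (t-1) b)) $$ (a,b)"
    using a b by simp
qed (use X in \<open>auto simp: delta'_mat_def delta_mat_def\<close>)

lemma Tprime_carrier: "Tprime r s t \<in> carrier_mat (r-1) (r-1)"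
  unfolding Tprime_def by simp

lemma Tprime_index: "x < r - 1 \<Longrightarrow> y < r - 1 \<Longrightarrow>
   Tprime r s t $$ (x,y) = Tf (t-1) (\<lambda>x. - ((-1)^t * s (Suc x))) x y"
  unfolding Tprime_def Tf_def by simp

lemma Mmat_eq:
  assumes r: "2 \<le> r" and t: "1 \<le> t" "t \<le> r - 1"
  shows "Mmat r s t f g = mat r (r - 1) (\<lambda>(a,b). if a < r - 2 then Tf (t-1) (\<lambda>x. - ((-1)^t * s (Suc x))) (sk (t-1) a) b
      else if b = t - 1 then (if a = r - 2 then f else g) else 0)"
proof -
  have D: "delta_mat (r - 1) t * Tprime r s t = mat (r - 2) (r - 1) (\<lambda>(a,b). Tprime r s t $$ (sk (t-1) a, b))"
    using delta_mult[OF Tprime_carrier t] by (simp add: numeral_2_eq_2 diff_diff_add)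
  show ?thesis
    unfolding Mmat_def append_rows_def D
  proof (rule eq_matI)
    fix a b assume a: "a < dim_row (mat r (r - 1) (\<lambda>(a,b). if a < r - 2 then Tf (t-1) (\<lambda>x. - ((-1)^t * s (Suc x))) (sk (t-1) a) b
      else if b = t - 1 then (if a = r - 2 then f else g) else 0))"
      and b: "b < dim_col (mat r (r - 1) (\<lambda>(a,b). if a < r - 2 then Tf (t-1) (\<lambda>x. - ((-1)^t * s (Suc x))) (sk (t-1) a) b
      else if b = t - 1 then (if a = r - 2 then f else g) else 0))"
    then have a': "a < r" and b': "b < r - 1" by auto
    show "four_block_mat (mat (r - 2) (r - 1) (\<lambda>(a, b). Tprime r s t $$ (sk (t - 1) a, b)))
           (0\<^sub>m (dim_row (mat (r - 2) (r - 1) (\<lambda>(a, b). Tprime r s t $$ (sk (t - 1) a, b)))) 0)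
           (Tsecond r f g t) (0\<^sub>m (dim_row (Tsecond r f g t)) 0) $$ (a, b) =
          mat r (r - 1) (\<lambda>(a,b). if a < r - 2 then Tf (t-1) (\<lambda>x. - ((-1)^t * s (Suc x))) (sk (t-1) a) b
      else if b = t - 1 then (if a = r - 2 then f else g) else 0) $$ (a, b)"
    proof (cases "a < r - 2")
      case True
      have "sk (t-1) a < r - 1" using True unfolding sk_def by auto
      then show ?thesis using True a' b' r by (simp add: Tprime_index Tsecond_def)
    next
      case False
      then show ?thesis using a' b' r by (auto simp: Tsecond_def)
    qed
  qed (use r in \<open>auto simp: Tsecond_def\<close>)
qed

lemma sum_split_sk: "q < n \<Longrightarrow> (\<Sum>m<n. g m) = (\<Sum>k<n-1. g (sk q k)) + (g q :: 'a::comm_ring_1)"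
proof -
  assume q: "q < n"
  have img: "{..<n} = insert q (sk q ` {..<n-1})"
  proof
    show "{..<n} \<subseteq> insert q (sk q ` {..<n - 1})"
    proof
      fix m assume m: "m \<in> {..<n}"
      show "m \<in> insert q (sk q ` {..<n - 1})"
      proof (cases "m = q")
        case False
        then have "m = sk q (dl q m)" "dl q m < n - 1" using m q unfolding sk_def dl_def by auto
        then show ?thesis by blast
      qed simp
    qed
    show "insert q (sk q ` {..<n - 1}) \<subseteq> {..<n}" using q unfolding sk_def by auto
  qed
  have nq: "q \<notin> sk q ` {..<n-1}" unfolding sk_def by auto
  have inj: "inj_on (sk q) {..<n-1}" unfolding sk_def inj_on_def by auto
  show ?thesis unfolding img using nq inj by (simp add: sum.reindex add.commute)
qed


lemma sk_ne: "sk q k \<noteq> q" unfolding sk_def by auto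
lemma dl_sk: "dl q (sk q k) = k" unfolding sk_def dl_def by auto
lemma sk_bound: "k < n - 2 \<Longrightarrow> sk q k < n - 1" unfolding sk_def by auto
lemma dl_bound: "b < n - 1 \<Longrightarrow> b \<noteq> q \<Longrightarrow> q < n - 1 \<Longrightarrow> dl q b < n - 2" unfolding dl_def by auto
lemma sk_eq_iff: "b \<noteq> q \<Longrightarrow> (sk q k = b) = (k = dl q b)" unfolding sk_def dl_def by auto

lemma sum_r2: "2 \<le> (r::nat) \<Longrightarrow> (\<Sum>k<r. g k) = (\<Sum>k<r-2. g k) + g (r-2) + (g (r-1) :: 'a::comm_ring_1)"
proof -
  assume "2 \<le> r"
  then obtain m where m: "r = Suc (Suc m)" by (metis add_2_eq_Suc le_Suc_ex)
  show ?thesis unfolding m by simp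
qed

lemma mat_eq_iff': "(mat m n f = mat m n g) = (\<forall>i<m. \<forall>j<n. f (i,j) = g (i,j))"
proof
  assume "mat m n f = mat m n g"
  then show "\<forall>i<m. \<forall>j<n. f (i,j) = g (i,j)" by (metis index_mat(1))
next
  assume "\<forall>i<m. \<forall>j<n. f (i,j) = g (i,j)"
  then show "mat m n f = mat m n g" by (intro eq_matI) auto
qed

lemma carrier_eq_mat_iff: "P \<in> carrier_mat m n \<Longrightarrow> (P = mat m n f) = (\<forall>i<m. \<forall>j<n. P $$ (i,j) = f (i,j))"
  by (auto intro!: eq_matI)

lemma col2_carrier: "col2 f g \<in> carrier_mat 2 1" unfolding col2_def by simp

lemma col2_mult: assumes "(Q :: 'a::comm_ring_1 mat) \<in> carrier_mat m 2"
  shows "Q * col2 f g = mat m 1 (\<lambda>(a,_). Q $$ (a,0) * f + Q $$ (a,1) * g)"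
proof (rule eq_matI)
  fix i j assume "i < dim_row (mat m 1 (\<lambda>(a,_). Q $$ (a,0) * f + Q $$ (a,1) * g))"
    "j < dim_col (mat m 1 (\<lambda>(a,_). Q $$ (a,0) * f + Q $$ (a,1) * g))"
  then show "(Q * col2 f g) $$ (i, j) = mat m 1 (\<lambda>(a,_). Q $$ (a,0) * f + Q $$ (a,1) * g) $$ (i, j)"
    using assms by (simp add: scalar_prod_def col2_def numeral_2_eq_2)
qed (use assms in \<open>auto simp: col2_def\<close>)

lemma smult_col2: "c \<cdot>\<^sub>m col2 f g = mat 2 1 (\<lambda>(a,_). c * (if a = 0 then f else g))"
  by (rule eq_matI) (auto simp: col2_def)

lemma eq_move: "((X::'a::ab_group_add) = -A + w) = (w = A + X)"
  by (auto simp: algebra_simps)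

lemma rowA:
  fixes e :: "'a::comm_ring_1"
  assumes ee: "e * e = 1" and q: "q < n" and sq: "s q = e"
  shows "(g q = (\<Sum>k<n-1. g (sk q k) * (- (e * s (sk q k)))) + w) \<longleftrightarrow> (w = e * (\<Sum>m<n. g m * s m))"
proof -
  define \<Sigma> where "\<Sigma> = (\<Sum>k<n-1. g (sk q k) * s (sk q k))"
  have 1: "(\<Sum>k<n-1. g (sk q k) * (- (e * s (sk q k)))) = - (e * \<Sigma>)"
    unfolding \<Sigma>_def sum_distrib_left sum_negf[symmetric] by (rule sum.cong) (auto simp: algebra_simps)
  have 2: "e * (\<Sum>m<n. g m * s m) = e * \<Sigma> + g q"
  proof -
    have "e * (\<Sum>m<n. g m * s m) = e * (\<Sigma> + g q * e)" unfolding \<Sigma>_def sum_split_sk[OF q] sq ..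
    also have "\<dots> = e * \<Sigma> + g q * (e * e)" by (simp add: algebra_simps)
    finally show ?thesis using ee by simp
  qed
  show ?thesis unfolding 1 2 eq_move ..
qed

lemma rowB:
  fixes e :: "'a::comm_ring_1"
  assumes ee: "e * e = 1" and q: "q < n" and p: "p < n" and sq: "s q = e"
  shows "((if q = p then \<phi> else 0) = (\<Sum>k<n-1. (if sk q k = p then \<phi> else 0) * (- (e * s (sk q k)))) + w)
     \<longleftrightarrow> (w = e * s p * \<phi>)"
proof -
  define \<Sigma> where "\<Sigma> = (\<Sum>k<n-1. if sk q k = p then s (sk q k) else 0)"
  have sp: "s p = \<Sigma> + (if q = p then e else 0)"
  proof -
    have "s p = (\<Sum>m<n. if m = p then s m else 0)" using p by (subst sum.delta) auto
    also have "\<dots> = \<Sigma> + (if q = p then s q else 0)" unfolding \<Sigma>_def sum_split_sk[OF q] ..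
    also have "\<dots> = \<Sigma> + (if q = p then e else 0)" by (simp only: sq)
    finally show ?thesis .
  qed
  have 1: "(\<Sum>k<n-1. (if sk q k = p then \<phi> else 0) * (- (e * s (sk q k)))) = - (e * \<phi> * \<Sigma>)"
    unfolding \<Sigma>_def sum_distrib_left sum_negf[symmetric] by (rule sum.cong) (auto simp: algebra_simps)
  have 2: "e * s p * \<phi> = e * \<phi> * \<Sigma> + (if q = p then \<phi> else 0)"
  proof (cases "q = p")
    case True
    have "e * s p * \<phi> = e * \<phi> * \<Sigma> + (e * e) * \<phi>"
      unfolding sp using True by (simp add: algebra_simps)
    then show ?thesis using ee True by simp
  next
    case False
    then show ?thesis unfolding sp by (simp add: algebra_simps)
  qed
  show ?thesis unfolding 1 2 eq_move ..
qed


lemma D3_id: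
  fixes e ei sjti u x y fj gj fi gi sitj h :: "'a::comm_ring_1" and A :: "nat \<Rightarrow> nat \<Rightarrow> 'a"
  assumes "sjti*u = 1" "x*fj + y*gj = 1 - e*ei*sitj*sjti"
    "fi = A 0 0*fj + A 0 1*gj" "gi = A 1 0*fj+A 1 1*gj" "A 0 0*A 1 1 - A 0 1*A 1 0 = ei*h*u"
  shows "D3 (-(ei*sitj)) x y fi gi (\<lambda>i j. e*sjti * A i j) = - (e*ei*h)"
proof -
  define dA where "dA = A 0 0*A 1 1 - A 0 1*A 1 0"
  have "D3 (-(ei*sitj)) x y fi gi (\<lambda>i j. e*sjti * A i j)
     = -(ei*sitj)*(e*sjti)*(e*sjti)*dA - (e*sjti)*dA*(x*fj+y*gj)"
    unfolding D3_def assms(3,4) dA_def by (simp add: algebra_simps)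
  also have "\<dots> = -(ei*sitj)*(e*sjti)*(e*sjti)*dA - (e*sjti)*dA*(1 - e*ei*sitj*sjti)"
    unfolding assms(2) ..
  also have "\<dots> = - (e*sjti*dA)" by (simp add: algebra_simps)
  also have "\<dots> = - (e*ei*h*(sjti*u))" unfolding dA_def assms(5) by (simp add: algebra_simps)
  also have "\<dots> = - (e*ei*h)" unfolding assms(1) by simp
  finally show ?thesis .
qed

theorem lemma4:
  fixes r ti tj :: nat
    and fi gi fj gj h hinv u :: "'a::comm_ring_1"
    and si sj :: "nat \<Rightarrow> 'a"
    and A :: "'a mat"
    and J :: "'a set"
  assumes r: "r \<ge> 2"
    and ti: "ti \<in> {1..r-1}" and tj: "tj \<in> {1..r-1}"
    \<comment> \<open>(b): f,g generate the ideal J of Y on the affine open U_i \<inter> U_j,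
        and the Koszul-type condition on this open\<close>
    and J_i: "J = {a * fi + b * gi | a b. True}"
    and J_j: "J = {a * fj + b * gj | a b. True}"
    and kos_i: "\<And>x y. x * fi = y * gi \<Longrightarrow> \<exists>w. x = w * gi \<and> y = w * fi"
    and kos_j: "\<And>x y. x * fj = y * gj \<Longrightarrow> \<exists>w. x = w * gj \<and> y = w * fj"
    \<comment> \<open>(a): h = h_ij is a unit with inverse hinv\<close>
    and h_unit: "h * hinv = 1"
    \<comment> \<open>(c)\<close>
    and A: "A \<in> carrier_mat 2 2"
    and A_rel: "col2 fi gi = A * col2 fj gj"
    \<comment> \<open>(d): s_it = (det A / h) s_jt modulo the ideal of Y\<close>
    and d: "\<And>t. t \<in> {1..r-1} \<Longrightarrow> si t - det A * hinv * sj t \<in> J"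
    \<comment> \<open>(e)\<close>
    and e_i: "si ti = (-1) ^ ti" and e_j: "sj tj = (-1) ^ tj"
    and s_unit: "sj ti * u = 1"
    and detA: "det A = (-1) ^ ti * h * u"
  shows
    "(\<forall>P Q R S. P \<in> carrier_mat (r-2) (r-2) \<longrightarrow> Q \<in> carrier_mat (r-2) 2 \<longrightarrow>
        R \<in> carrier_mat 2 (r-2) \<longrightarrow> S \<in> carrier_mat 2 2 \<longrightarrow>
        (Mmat r si ti fi gi = four_block_mat P Q R S * Mmat r sj tj fj gj \<longleftrightarrow>
           P = delta_mat (r-1) ti * Tprime r si ti * delta'_mat (r-1) tj \<and>
           R = Tsecond r fi gi ti * delta'_mat (r-1) tj \<and>
           Q * col2 fj gj = ((-1) ^ tj) \<cdot>\<^sub>m (delta_mat (r-1) ti * Tprime r si ti * svec r sj) \<and>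
           S * col2 fj gj = ((-1) ^ tj * sj ti) \<cdot>\<^sub>m col2 fi gi))
     \<and> (((-1) ^ tj * sj ti) \<cdot>\<^sub>m A) * col2 fj gj = ((-1) ^ tj * sj ti) \<cdot>\<^sub>m col2 fi gi
     \<and> (\<exists>P Q R. P \<in> carrier_mat (r-2) (r-2) \<and> Q \<in> carrier_mat (r-2) 2 \<and>
          R \<in> carrier_mat 2 (r-2) \<and>
          Mmat r si ti fi gi = four_block_mat P Q R (((-1) ^ tj * sj ti) \<cdot>\<^sub>m A) * Mmat r sj tj fj gj)
     \<and> (\<forall>P Q R. P \<in> carrier_mat (r-2) (r-2) \<longrightarrow> Q \<in> carrier_mat (r-2) 2 \<longrightarrow>
          R \<in> carrier_mat 2 (r-2) \<longrightarrow>
          P = delta_mat (r-1) ti * Tprime r si ti * delta'_mat (r-1) tj \<longrightarrow>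
          R = Tsecond r fi gi ti * delta'_mat (r-1) tj \<longrightarrow>
          Q * col2 fj gj = ((-1) ^ tj) \<cdot>\<^sub>m (delta_mat (r-1) ti * Tprime r si ti * svec r sj) \<longrightarrow>
          det (((-1) ^ tj * sj ti) \<cdot>\<^sub>m A) = (-1) ^ ti * sj ti * h \<and>
          det (four_block_mat P Q R (((-1) ^ tj * sj ti) \<cdot>\<^sub>m A)) = h)"
proof -
  define p where "p = ti - 1"
  define q where "q = tj - 1"
  define \<alpha>1 where "\<alpha>1 = (\<lambda>x. - ((-1)^ti * si (Suc x)))"
  define \<alpha>2 where "\<alpha>2 = (\<lambda>x. - ((-1)^tj * sj (Suc x)))"
  define e where "e = ((-1::'a)^tj)"
  define ei where "ei = ((-1::'a)^ti)"
  have ee: "e * e = 1" unfolding e_def by (simp add: power_mult_distrib[symmetric])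
  have eiei: "ei * ei = 1" unfolding ei_def by (simp add: power_mult_distrib[symmetric])
  have r2: "r - 2 + 2 = r" using r by simp
  have pn: "p < r - 1" "q < r - 1" using ti tj by (auto simp: p_def q_def)
  have tiq: "Suc p = ti" "Suc q = tj" using ti tj by (auto simp: p_def q_def)
  have e_sj: "sj (Suc q) = e" using e_j tiq unfolding e_def by simp
  have e_sj2: "sj tj = e" using e_j unfolding e_def .
  let ?Mi = "Mmat r si ti fi gi" and ?Mj = "Mmat r sj tj fj gj"
  have Mi: "?Mi = mat r (r-1) (\<lambda>(a,b). if a < r - 2 then Tf p \<alpha>1 (sk p a) b
      else if b = p then (if a = r - 2 then fi else gi) else 0)"
    unfolding p_def \<alpha>1_def by (rule Mmat_eq) (use r ti in auto)
  have Mj: "?Mj = mat r (r-1) (\<lambda>(a,b). if a < r - 2 then Tf q \<alpha>2 (sk q a) b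
      else if b = q then (if a = r - 2 then fj else gj) else 0)"
    unfolding q_def \<alpha>2_def by (rule Mmat_eq) (use r tj in auto)
  have T1i: "\<And>x y. x < r - 1 \<Longrightarrow> y < r - 1 \<Longrightarrow> Tprime r si ti $$ (x,y) = Tf p \<alpha>1 x y"
    unfolding p_def \<alpha>1_def by (rule Tprime_index)
  have D: "delta_mat (r-1) ti * Tprime r si ti = mat (r-2) (r-1) (\<lambda>(a,b). Tprime r si ti $$ (sk p a, b))"
    using delta_mult[OF Tprime_carrier, of ti r si] ti unfolding p_def by (simp add: numeral_2_eq_2 diff_diff_add)
  have P0: "delta_mat (r-1) ti * Tprime r si ti * delta'_mat (r-1) tj
     = mat (r-2) (r-2) (\<lambda>(a,b). Tf p \<alpha>1 (sk p a) (sk q b))"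
  proof -
    have E: "mat (r-2) (r-1) (\<lambda>(a,b). Tprime r si ti $$ (sk p a, b)) * delta'_mat (r-1) tj
      = mat (r-2) (r-1-1) (\<lambda>(a,b). mat (r-2) (r-1) (\<lambda>(a,b). Tprime r si ti $$ (sk p a, b)) $$ (a, sk q b))"
      unfolding q_def by (rule mult_delta') (use tj in auto)
    show ?thesis unfolding D E
    proof (rule eq_matI)
      fix a b assume a: "a < dim_row (mat (r - 2) (r - 2) (\<lambda>(a, b). Tf p \<alpha>1 (sk p a) (sk q b)))"
        and b: "b < dim_col (mat (r - 2) (r - 2) (\<lambda>(a, b). Tf p \<alpha>1 (sk p a) (sk q b)))"
      have a': "a < r - 2" and b': "b < r - 2" using a b by auto
      have sa: "sk p a < r - 1" and sb: "sk q b < r - 1" using a' b' sk_bound by auto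
      show "mat (r - 2) (r - 1 - 1) (\<lambda>(a, b). mat (r - 2) (r - 1) (\<lambda>(a, b). Tprime r si ti $$ (sk p a, b)) $$ (a, sk q b)) $$ (a, b)
          = mat (r - 2) (r - 2) (\<lambda>(a, b). Tf p \<alpha>1 (sk p a) (sk q b)) $$ (a, b)"
        using a' b' sa sb by (simp add: T1i diff_diff_add)
    qed (auto simp: diff_diff_add)
  qed
  have R0: "Tsecond r fi gi ti * delta'_mat (r-1) tj
     = mat 2 (r-2) (\<lambda>(c,b). if sk q b = p then (if c = 0 then fi else gi) else 0)"
  proof -
    have E: "Tsecond r fi gi ti * delta'_mat (r-1) tj
      = mat 2 (r-1-1) (\<lambda>(a,b). Tsecond r fi gi ti $$ (a, sk q b))"
      unfolding q_def by (rule mult_delta') (use tj in \<open>auto simp: Tsecond_def\<close>)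
    show ?thesis unfolding E
    proof (rule eq_matI)
      fix a b assume a: "a < dim_row (mat 2 (r - 2) (\<lambda>(c,b). if sk q b = p then (if c = 0 then fi else gi) else 0))"
        and b: "b < dim_col (mat 2 (r - 2) (\<lambda>(c,b). if sk q b = p then (if c = 0 then fi else gi) else 0))"
      have a': "a < 2" and b': "b < r - 2" using a b by auto
      have sb: "sk q b < r - 1" using b' sk_bound by auto
      show "mat 2 (r - 1 - 1) (\<lambda>(a,b). Tsecond r fi gi ti $$ (a, sk q b)) $$ (a, b)
          = mat 2 (r - 2) (\<lambda>(c,b). if sk q b = p then (if c = 0 then fi else gi) else 0) $$ (a, b)"
        using a' b' sb by (simp add: Tsecond_def p_def diff_diff_add)
    qed (auto simp: diff_diff_add)
  qed
  define Vf where "Vf = (\<lambda>a. e * (\<Sum>m<r-1. Tf p \<alpha>1 (sk p a) m * sj (Suc m)))"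
  have V0: "(-1)^tj \<cdot>\<^sub>m (delta_mat (r-1) ti * Tprime r si ti * svec r sj) = mat (r-2) 1 (\<lambda>(a,_). Vf a)"
    unfolding D
  proof (rule eq_matI)
    fix a b assume a: "a < dim_row (mat (r - 2) 1 (\<lambda>(a, _). Vf a))" and b: "b < dim_col (mat (r - 2) 1 (\<lambda>(a, _). Vf a))"
    have a': "a < r - 2" and b': "b = 0" using a b by auto
    have sa: "sk p a < r - 1" using a' sk_bound by auto
    have "(mat (r - 2) (r - 1) (\<lambda>(a, b). Tprime r si ti $$ (sk p a, b)) * svec r sj) $$ (a, 0)
        = (\<Sum>m<r-1. Tf p \<alpha>1 (sk p a) m * sj (Suc m))"
      using a' sa by (auto simp: scalar_prod_def svec_def atLeast0LessThan T1i intro!: sum.cong)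
    then show "((-1)^tj \<cdot>\<^sub>m (mat (r - 2) (r - 1) (\<lambda>(a, b). Tprime r si ti $$ (sk p a, b)) * svec r sj)) $$ (a, b)
        = mat (r - 2) 1 (\<lambda>(a, _). Vf a) $$ (a, b)"
      using a' b' unfolding Vf_def e_def by (simp add: svec_def)
  qed (auto simp: svec_def)
  have part1: "\<And>P Q R S. P \<in> carrier_mat (r-2) (r-2) \<Longrightarrow> Q \<in> carrier_mat (r-2) 2 \<Longrightarrow>
        R \<in> carrier_mat 2 (r-2) \<Longrightarrow> S \<in> carrier_mat 2 2 \<Longrightarrow>
        (Mmat r si ti fi gi = four_block_mat P Q R S * Mmat r sj tj fj gj \<longleftrightarrow>
           P = delta_mat (r-1) ti * Tprime r si ti * delta'_mat (r-1) tj \<and>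
           R = Tsecond r fi gi ti * delta'_mat (r-1) tj \<and>
           Q * col2 fj gj = ((-1) ^ tj) \<cdot>\<^sub>m (delta_mat (r-1) ti * Tprime r si ti * svec r sj) \<and>
           S * col2 fj gj = ((-1) ^ tj * sj ti) \<cdot>\<^sub>m col2 fi gi)"
  proof -
    fix P Q R S :: "'a mat"
    assume P: "P \<in> carrier_mat (r-2) (r-2)" and Q: "Q \<in> carrier_mat (r-2) 2"
      and R: "R \<in> carrier_mat 2 (r-2)" and S: "S \<in> carrier_mat 2 2"
    let ?Z = "four_block_mat P Q R S"
    have Zc: "?Z \<in> carrier_mat r r" using four_block_carrier_mat[OF P S] r2 by simp
    have Zi: "\<And>a k. a < r \<Longrightarrow> k < r \<Longrightarrow> ?Z $$ (a,k) = (if a < r-2 then (if k < r-2 then P$$(a,k) else Q$$(a,k-(r-2)))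
        else (if k < r-2 then R$$(a-(r-2),k) else S$$(a-(r-2),k-(r-2))))"
      using P Q R S r by (subst index_mat_four_block) auto
    have Mjc: "?Mj \<in> carrier_mat r (r-1)" by (simp add: Mj)
    have ZM: "\<And>a b. a < r \<Longrightarrow> b < r - 1 \<Longrightarrow> (?Z * ?Mj) $$ (a,b) = (if b = q then
        (\<Sum>k<r-2. ?Z$$(a,k) * \<alpha>2 (sk q k)) + ?Z$$(a,r-2)*fj + ?Z$$(a,r-1)*gj else ?Z$$(a, dl q b))"
    proof -
      fix a b assume a: "a < r" and b: "b < r - 1"
      have "(?Z * ?Mj) $$ (a,b) = (\<Sum>k<r. ?Z$$(a,k) * ?Mj$$(k,b))"
      proof -
        have dZ: "dim_row ?Z = r" "dim_col ?Z = r" "dim_row ?Mj = r" "dim_col ?Mj = r - 1"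
          using Zc Mjc by auto
        show ?thesis using a b dZ by (auto simp: scalar_prod_def atLeast0LessThan intro!: sum.cong)
      qed
      also have "\<dots> = (\<Sum>k<r-2. ?Z$$(a,k) * ?Mj$$(k,b)) + ?Z$$(a,r-2) * ?Mj$$(r-2,b) + ?Z$$(a,r-1) * ?Mj$$(r-1,b)"
        by (rule sum_r2[OF r])
      also have "\<dots> = (\<Sum>k<r-2. ?Z$$(a,k) * Tf q \<alpha>2 (sk q k) b) + ?Z$$(a,r-2) * (if b = q then fj else 0)
          + ?Z$$(a,r-1) * (if b = q then gj else 0)"
      proof -
        have "(\<Sum>k<r-2. ?Z$$(a,k) * ?Mj$$(k,b)) = (\<Sum>k<r-2. ?Z$$(a,k) * Tf q \<alpha>2 (sk q k) b)"
          by (intro sum.cong) (use b in \<open>auto simp: Mj\<close>)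
        moreover have "?Mj$$(r-2,b) = (if b = q then fj else 0)" "?Mj$$(r-1,b) = (if b = q then gj else 0)"
          using b r by (auto simp: Mj)
        ultimately show ?thesis by simp
      qed
      also have "\<dots> = (if b = q then
        (\<Sum>k<r-2. ?Z$$(a,k) * \<alpha>2 (sk q k)) + ?Z$$(a,r-2)*fj + ?Z$$(a,r-1)*gj else ?Z$$(a, dl q b))"
      proof (cases "b = q")
        case True
        then show ?thesis by (simp add: Tf_def sk_ne)
      next
        case False
        have "(\<Sum>k<r-2. ?Z$$(a,k) * Tf q \<alpha>2 (sk q k) b) = (\<Sum>k<r-2. (if k = dl q b then 1 else 0) * ?Z$$(a,k))"
          using False by (intro sum.cong) (auto simp: Tf_def sk_eq_iff)
        also have "\<dots> = ?Z$$(a, dl q b)" by (rule sum_single) (use dl_bound[OF b False pn(2)] in auto)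
        finally show ?thesis using False by simp
      qed
      finally show "(?Z * ?Mj) $$ (a,b) = (if b = q then
        (\<Sum>k<r-2. ?Z$$(a,k) * \<alpha>2 (sk q k)) + ?Z$$(a,r-2)*fj + ?Z$$(a,r-1)*gj else ?Z$$(a, dl q b))" .
    qed
    have Mie: "\<And>a b. a < r \<Longrightarrow> b < r - 1 \<Longrightarrow> ?Mi $$ (a,b) = (if a < r - 2 then Tf p \<alpha>1 (sk p a) b
      else if b = p then (if a = r - 2 then fi else gi) else 0)" by (simp add: Mi)
    have step1: "(?Mi = ?Z * ?Mj) \<longleftrightarrow> (\<forall>a<r. \<forall>b<r-1. ?Mi $$ (a,b) = (?Z * ?Mj) $$ (a,b))"
    proof
      assume "\<forall>a<r. \<forall>b<r-1. ?Mi $$ (a,b) = (?Z * ?Mj) $$ (a,b)"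
      then show "?Mi = ?Z * ?Mj" using Zc Mjc by (intro eq_matI) (auto simp: Mi)
    qed simp
    define FamI where "FamI = (\<forall>a<r. \<forall>k<r-2. ?Mi $$ (a, sk q k) = ?Z $$ (a,k))"
    define FamII where "FamII = (\<forall>a<r. ?Mi $$ (a,q) = (\<Sum>k<r-2. ?Z$$(a,k) * \<alpha>2 (sk q k)) + ?Z$$(a,r-2)*fj + ?Z$$(a,r-1)*gj)"
    have step2: "(\<forall>a<r. \<forall>b<r-1. ?Mi $$ (a,b) = (?Z * ?Mj) $$ (a,b)) \<longleftrightarrow> FamI \<and> FamII"
    proof
      assume H: "\<forall>a<r. \<forall>b<r-1. ?Mi $$ (a,b) = (?Z * ?Mj) $$ (a,b)"
      have "FamI" unfolding FamI_def
      proof (intro allI impI)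
        fix a k assume a: "a < r" and k: "k < r - 2"
        have sk: "sk q k < r - 1" using k sk_bound by auto
        show "?Mi $$ (a, sk q k) = ?Z $$ (a,k)"
          using H[rule_format, OF a sk] ZM[OF a sk] by (simp add: sk_ne dl_sk)
      qed
      moreover have "FamII" unfolding FamII_def
        using H ZM pn(2) by auto
      ultimately show "FamI \<and> FamII" ..
    next
      assume H: "FamI \<and> FamII"
      show "\<forall>a<r. \<forall>b<r-1. ?Mi $$ (a,b) = (?Z * ?Mj) $$ (a,b)"
      proof (intro allI impI)
        fix a b assume a: "a < r" and b: "b < r - 1"
        show "?Mi $$ (a,b) = (?Z * ?Mj) $$ (a,b)"
        proof (cases "b = q")
          case True
          then show ?thesis using H a b ZM[OF a b] unfolding FamII_def by auto
        next
          case False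
          have k: "dl q b < r - 2" using dl_bound[OF b False pn(2)] .
          show ?thesis using H a k ZM[OF a b] False sk_dl[OF False] unfolding FamI_def by force
        qed
      qed
    qed
    have Pcond: "(P = delta_mat (r-1) ti * Tprime r si ti * delta'_mat (r-1) tj) \<longleftrightarrow>
        (\<forall>a<r-2. \<forall>k<r-2. P $$ (a,k) = Tf p \<alpha>1 (sk p a) (sk q k))"
      unfolding P0 carrier_eq_mat_iff[OF P] by simp
    have Rcond: "(R = Tsecond r fi gi ti * delta'_mat (r-1) tj) \<longleftrightarrow>
        (\<forall>c<2. \<forall>k<r-2. R $$ (c,k) = (if sk q k = p then (if c = 0 then fi else gi) else 0))"
      unfolding R0 carrier_eq_mat_iff[OF R] by simp
    have step3: "FamI \<longleftrightarrow> (P = delta_mat (r-1) ti * Tprime r si ti * delta'_mat (r-1) tj)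
        \<and> (R = Tsecond r fi gi ti * delta'_mat (r-1) tj)"
      unfolding Pcond Rcond
    proof
      assume H: FamI
      have A: "\<forall>a<r-2. \<forall>k<r-2. P $$ (a,k) = Tf p \<alpha>1 (sk p a) (sk q k)"
      proof (intro allI impI)
        fix a k assume a: "a < r - 2" and k: "k < r - 2"
        have sk: "sk q k < r - 1" using k sk_bound by auto
        have "?Mi $$ (a, sk q k) = ?Z $$ (a,k)" using H a k unfolding FamI_def by auto
        then show "P $$ (a,k) = Tf p \<alpha>1 (sk p a) (sk q k)" using a k sk Mie[of a "sk q k"] Zi[of a k] by simp
      qed
      have B: "\<forall>c<2. \<forall>k<r-2. R $$ (c,k) = (if sk q k = p then (if c = 0 then fi else gi) else 0)"
      proof (intro allI impI)
        fix c k assume c: "c < (2::nat)" and k: "k < r - 2"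
        have sk: "sk q k < r - 1" using k sk_bound by auto
        define i where "i = r - 2 + c"
        have ar: "i < r" and ni: "\<not> i < r - 2" and ic: "i - (r - 2) = c" and i0: "(i = r - 2) = (c = 0)"
          using c r unfolding i_def by auto
        have kr: "k < r" using k by simp
        have "?Mi $$ (i, sk q k) = ?Z $$ (i,k)" using H ar k unfolding FamI_def by auto
        moreover have "?Mi $$ (i, sk q k) = (if sk q k = p then (if c = 0 then fi else gi) else 0)"
          using Mie[OF ar sk] ni i0 by simp
        moreover have "?Z $$ (i,k) = R $$ (c,k)" using Zi[OF ar kr] ni ic k by simp
        ultimately show "R $$ (c,k) = (if sk q k = p then (if c = 0 then fi else gi) else 0)"
          by simp
      qed
      show "(\<forall>a<r-2. \<forall>k<r-2. P $$ (a,k) = Tf p \<alpha>1 (sk p a) (sk q k)) \<and>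
        (\<forall>c<2. \<forall>k<r-2. R $$ (c,k) = (if sk q k = p then (if c = 0 then fi else gi) else 0))" using A B ..
    next
      assume H: "(\<forall>a<r-2. \<forall>k<r-2. P $$ (a,k) = Tf p \<alpha>1 (sk p a) (sk q k)) \<and>
        (\<forall>c<2. \<forall>k<r-2. R $$ (c,k) = (if sk q k = p then (if c = 0 then fi else gi) else 0))"
      show FamI unfolding FamI_def
      proof (intro allI impI)
        fix a k assume a: "a < r" and k: "k < r - 2"
        have sk: "sk q k < r - 1" using k sk_bound by auto
        show "?Mi $$ (a, sk q k) = ?Z $$ (a,k)"
        proof (cases "a < r - 2")
          case True
          then show ?thesis using H a k sk Mie[OF a sk] Zi[of a k] by simp
        next
          case False
          then have c: "a - (r - 2) < 2" using a by simp
          have "R $$ (a - (r-2), k) = (if sk q k = p then (if a - (r-2) = 0 then fi else gi) else 0)"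
            using H c k by blast
          then show ?thesis using False a k sk Mie[OF a sk] Zi[of a k] by auto
        qed
      qed
    qed
    have Qcond: "(Q * col2 fj gj = ((-1) ^ tj) \<cdot>\<^sub>m (delta_mat (r-1) ti * Tprime r si ti * svec r sj)) \<longleftrightarrow>
        (\<forall>a<r-2. Q $$ (a,0) * fj + Q $$ (a,1) * gj = Vf a)"
      unfolding V0 col2_mult[OF Q] mat_eq_iff' by simp
    have Scond: "(S * col2 fj gj = ((-1) ^ tj * sj ti) \<cdot>\<^sub>m col2 fi gi) \<longleftrightarrow>
        (\<forall>c<2. S $$ (c,0) * fj + S $$ (c,1) * gj = e * sj ti * (if c = 0 then fi else gi))"
      unfolding smult_col2 col2_mult[OF S] mat_eq_iff' e_def by simp
    have step4: "FamI \<Longrightarrow> FamII \<longleftrightarrow> (\<forall>a<r-2. Q $$ (a,0) * fj + Q $$ (a,1) * gj = Vf a) \<and>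
        (\<forall>c<2. S $$ (c,0) * fj + S $$ (c,1) * gj = e * sj ti * (if c = 0 then fi else gi))"
    proof -
      assume FI: FamI
      then have PR: "\<forall>a<r-2. \<forall>k<r-2. P $$ (a,k) = Tf p \<alpha>1 (sk p a) (sk q k)"
        "\<forall>c<2. \<forall>k<r-2. R $$ (c,k) = (if sk q k = p then (if c = 0 then fi else gi) else 0)"
        using step3 unfolding Pcond Rcond by auto
      have rowsA: "\<And>a. a < r - 2 \<Longrightarrow> (?Mi $$ (a,q) = (\<Sum>k<r-2. ?Z$$(a,k) * \<alpha>2 (sk q k)) + ?Z$$(a,r-2)*fj + ?Z$$(a,r-1)*gj)
          \<longleftrightarrow> (Q $$ (a,0) * fj + Q $$ (a,1) * gj = Vf a)"
      proof -
        fix a assume a: "a < r - 2"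
        have ar: "a < r" by (rule less_le_trans[OF a]) simp
        have s1: "(\<Sum>k<r-2. ?Z$$(a,k) * \<alpha>2 (sk q k)) = (\<Sum>k<r-1-1. Tf p \<alpha>1 (sk p a) (sk q k) * (- (e * sj (Suc (sk q k)))))"
          using PR(1) a Zi[OF ar] unfolding \<alpha>2_def e_def by (intro sum.cong) (auto simp: numeral_2_eq_2 diff_diff_add)
        have z1: "?Z$$(a,r-2) = Q $$ (a,0)" "?Z$$(a,r-1) = Q $$ (a,1)"
          using a r Zi[OF ar] by auto
        have mi: "?Mi $$ (a,q) = Tf p \<alpha>1 (sk p a) q" using a ar pn Mie by simp
        show "(?Mi $$ (a,q) = (\<Sum>k<r-2. ?Z$$(a,k) * \<alpha>2 (sk q k)) + ?Z$$(a,r-2)*fj + ?Z$$(a,r-1)*gj)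
          \<longleftrightarrow> (Q $$ (a,0) * fj + Q $$ (a,1) * gj = Vf a)"
          unfolding s1 z1 mi add.assoc Vf_def
          by (rule rowA[OF ee pn(2), of "\<lambda>m. sj (Suc m)"]) (use e_sj in simp)
      qed
      have rowsB: "\<And>c. c < 2 \<Longrightarrow> (?Mi $$ (r-2+c,q) = (\<Sum>k<r-2. ?Z$$(r-2+c,k) * \<alpha>2 (sk q k)) + ?Z$$(r-2+c,r-2)*fj + ?Z$$(r-2+c,r-1)*gj)
          \<longleftrightarrow> (S $$ (c,0) * fj + S $$ (c,1) * gj = e * sj ti * (if c = 0 then fi else gi))"
      proof -
        fix c :: nat assume c: "c < 2"
        define i where "i = r - 2 + c"
        have ar: "i < r" and ni: "\<not> i < r - 2" and ic: "i - (r - 2) = c" and i0: "(i = r - 2) = (c = 0)"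
          using c r unfolding i_def by auto
        have ic2: "r - 2 - (r - 2) = 0" "r - 1 - (r - 2) = 1" "\<not> r - 1 < r - 2" "\<not> r - 2 < r - 2" "r - 1 < r" "r - 2 < r"
          using r by auto
        define \<phi> where "\<phi> = (if c = 0 then fi else gi)"
        have s1: "(\<Sum>k<r-2. ?Z$$(i,k) * \<alpha>2 (sk q k)) = (\<Sum>k<r-1-1. (if sk q k = p then \<phi> else 0) * (- (e * sj (Suc (sk q k)))))"
        proof (intro sum.cong)
          fix k assume k: "k \<in> {..<r-1-1}"
          then have k': "k < r - 2" "k < r" by auto
          have "?Z$$(i,k) = R $$ (c,k)" using Zi[OF ar k'(2)] ni ic k' by simp
          then show "?Z$$(i,k) * \<alpha>2 (sk q k) = (if sk q k = p then \<phi> else 0) * (- (e * sj (Suc (sk q k))))"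
            using PR(2) c k' unfolding \<alpha>2_def e_def \<phi>_def by auto
        qed (simp add: diff_diff_add)
        have z1: "?Z$$(i,r-2) = S $$ (c,0)" "?Z$$(i,r-1) = S $$ (c,1)"
          using Zi[OF ar ic2(6)] Zi[OF ar ic2(5)] ni ic ic2 by simp_all
        have mi: "?Mi $$ (i,q) = (if q = p then \<phi> else 0)" using Mie[OF ar pn(2)] ni i0 unfolding \<phi>_def by simp
        have "(?Mi $$ (i,q) = (\<Sum>k<r-2. ?Z$$(i,k) * \<alpha>2 (sk q k)) + ?Z$$(i,r-2)*fj + ?Z$$(i,r-1)*gj)
          \<longleftrightarrow> (S $$ (c,0) * fj + S $$ (c,1) * gj = e * sj (Suc p) * \<phi>)"
          unfolding s1 z1 mi add.assoc
          by (rule rowB[OF ee pn(2) pn(1), of "\<lambda>m. sj (Suc m)"]) (use e_sj in simp)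
        then show "(?Mi $$ (r-2+c,q) = (\<Sum>k<r-2. ?Z$$(r-2+c,k) * \<alpha>2 (sk q k)) + ?Z$$(r-2+c,r-2)*fj + ?Z$$(r-2+c,r-1)*gj)
          \<longleftrightarrow> (S $$ (c,0) * fj + S $$ (c,1) * gj = e * sj ti * (if c = 0 then fi else gi))"
          unfolding i_def tiq \<phi>_def .
      qed
      show ?thesis
      proof
        assume F2: FamII
        show "(\<forall>a<r-2. Q $$ (a,0) * fj + Q $$ (a,1) * gj = Vf a) \<and>
          (\<forall>c<2. S $$ (c,0) * fj + S $$ (c,1) * gj = e * sj ti * (if c = 0 then fi else gi))"
        proof (intro conjI allI impI)
          fix a assume a: "a < r - 2"
          have ar: "a < r" by (rule less_le_trans[OF a]) simp
          show "Q $$ (a,0) * fj + Q $$ (a,1) * gj = Vf a" using rowsA[OF a] F2 ar unfolding FamII_def by blast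
        next
          fix c :: nat assume c: "c < 2"
          have ar: "r - 2 + c < r" using c r by simp
          show "S $$ (c,0) * fj + S $$ (c,1) * gj = e * sj ti * (if c = 0 then fi else gi)"
            using rowsB[OF c] F2 ar unfolding FamII_def by blast
        qed
      next
        assume H: "(\<forall>a<r-2. Q $$ (a,0) * fj + Q $$ (a,1) * gj = Vf a) \<and>
          (\<forall>c<2. S $$ (c,0) * fj + S $$ (c,1) * gj = e * sj ti * (if c = 0 then fi else gi))"
        show FamII unfolding FamII_def
        proof (intro allI impI)
          fix a assume a: "a < r"
          show "?Mi $$ (a,q) = (\<Sum>k<r-2. ?Z$$(a,k) * \<alpha>2 (sk q k)) + ?Z$$(a,r-2)*fj + ?Z$$(a,r-1)*gj"
          proof (cases "a < r - 2")
            case True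
            then show ?thesis using rowsA[OF True] H by blast
          next
            case False
            define c where "c = a - (r - 2)"
            have c: "c < 2" and ac: "a = r - 2 + c" using False a unfolding c_def by auto
            show ?thesis using rowsB[OF c] H c unfolding ac by blast
          qed
        qed
      qed
    qed
    show "(Mmat r si ti fi gi = four_block_mat P Q R S * Mmat r sj tj fj gj \<longleftrightarrow>
           P = delta_mat (r-1) ti * Tprime r si ti * delta'_mat (r-1) tj \<and>
           R = Tsecond r fi gi ti * delta'_mat (r-1) tj \<and>
           Q * col2 fj gj = ((-1) ^ tj) \<cdot>\<^sub>m (delta_mat (r-1) ti * Tprime r si ti * svec r sj) \<and>
           S * col2 fj gj = ((-1) ^ tj * sj ti) \<cdot>\<^sub>m col2 fi gi)"
      unfolding step1 step2 Qcond Scond using step3 step4 by blast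
  qed
  have part2: "(((-1) ^ tj * sj ti) \<cdot>\<^sub>m A) * col2 fj gj = ((-1) ^ tj * sj ti) \<cdot>\<^sub>m col2 fi gi"
    using mult_smult_assoc_mat[OF A col2_carrier] A_rel by simp
  have Jmem: "\<And>a. a < r - 2 \<Longrightarrow> Vf a \<in> J"
  proof -
    fix a assume a: "a < r - 2"
    define x where "x = sk p a"
    have xp: "x \<noteq> p" unfolding x_def by (rule sk_ne)
    have x: "x < r - 1" unfolding x_def using a sk_bound by auto
    have sumx: "(\<Sum>m<r-1. Tf p \<alpha>1 x m * sj (Suc m)) = sj (Suc x) - ei * si (Suc x) * sj ti"
    proof -
      have "(\<Sum>m<r-1. Tf p \<alpha>1 x m * sj (Suc m)) = (\<Sum>k<r-1-1. Tf p \<alpha>1 x (sk p k) * sj (Suc (sk p k))) + Tf p \<alpha>1 x p * sj (Suc p)"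
        by (rule sum_split_sk[OF pn(1)])
      also have "(\<Sum>k<r-1-1. Tf p \<alpha>1 x (sk p k) * sj (Suc (sk p k))) = (\<Sum>k<r-1-1. (if k = dl p x then 1 else 0) * sj (Suc (sk p k)))"
        by (intro sum.cong) (auto simp: Tf_def sk_ne sk_eq_iff[OF xp] eq_commute[of x])
      also have "\<dots> = sj (Suc (sk p (dl p x)))"
        by (rule sum_single) (use dl_bound[OF x xp pn(1)] in \<open>auto simp: numeral_2_eq_2 diff_diff_add\<close>)
      also have "Tf p \<alpha>1 x p = \<alpha>1 x" using xp unfolding Tf_def by simp
      finally show ?thesis unfolding sk_dl[OF xp] \<alpha>1_def ei_def tiq by (simp add: algebra_simps)
    qed
    have xt: "Suc x \<in> {1..r-1}" using x by auto
    have dAh: "det A * hinv = ei * u" unfolding detA ei_def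
      by (metis h_unit mult.commute mult.left_commute mult.right_neutral)
    obtain c1 c2 where c: "si (Suc x) - ei * u * sj (Suc x) = c1 * fj + c2 * gj"
      using d[OF xt] unfolding J_j dAh by blast
    have "Vf a = (- (e * ei * sj ti)) * (si (Suc x) - ei * u * sj (Suc x))"
    proof -
      have "Vf a = e * (sj (Suc x) - ei * si (Suc x) * sj ti)" unfolding Vf_def x_def[symmetric] sumx ..
      also have "\<dots> = e * ((sj ti * u) * (ei * ei) * sj (Suc x) - ei * si (Suc x) * sj ti)"
        using s_unit eiei by simp
      also have "\<dots> = (- (e * ei * sj ti)) * (si (Suc x) - ei * u * sj (Suc x))"
        by (simp add: algebra_simps)
      finally show ?thesis .
    qed
    also have "\<dots> = ((- (e * ei * sj ti)) * c1) * fj + ((- (e * ei * sj ti)) * c2) * gj"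
      unfolding c by (simp add: algebra_simps)
    finally show "Vf a \<in> J" unfolding J_j by blast
  qed
  have "\<forall>a. \<exists>xy. a < r - 2 \<longrightarrow> Vf a = fst xy * fj + snd xy * gj"
  proof
    fix a show "\<exists>xy. a < r - 2 \<longrightarrow> Vf a = fst xy * fj + snd xy * gj"
    proof (cases "a < r - 2")
      case True
      then obtain c1 c2 where "Vf a = c1 * fj + c2 * gj" using Jmem[OF True] unfolding J_j by blast
      then show ?thesis by (intro exI[of _ "(c1, c2)"]) simp
    qed simp
  qed
  then obtain XY where XY: "\<And>a. a < r - 2 \<Longrightarrow> Vf a = fst (XY a) * fj + snd (XY a) * gj"
    by metis
  define Q0 where "Q0 = mat (r-2) 2 (\<lambda>(a,c). if c = 0 then fst (XY a) else snd (XY a))"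
  have Q0c: "Q0 \<in> carrier_mat (r-2) 2" unfolding Q0_def by simp
  have P0c: "delta_mat (r-1) ti * Tprime r si ti * delta'_mat (r-1) tj \<in> carrier_mat (r-2) (r-2)"
    unfolding P0 by simp
  have R0c: "Tsecond r fi gi ti * delta'_mat (r-1) tj \<in> carrier_mat 2 (r-2)"
    unfolding R0 by simp
  have S0c: "((-1) ^ tj * sj ti) \<cdot>\<^sub>m A \<in> carrier_mat 2 2" using A by simp
  have Q0v: "Q0 * col2 fj gj = ((-1) ^ tj) \<cdot>\<^sub>m (delta_mat (r-1) ti * Tprime r si ti * svec r sj)"
    unfolding V0 col2_mult[OF Q0c] mat_eq_iff' using XY by (simp add: Q0_def)
  have part3: "\<exists>P Q R. P \<in> carrier_mat (r-2) (r-2) \<and> Q \<in> carrier_mat (r-2) 2 \<and>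
          R \<in> carrier_mat 2 (r-2) \<and>
          Mmat r si ti fi gi = four_block_mat P Q R (((-1) ^ tj * sj ti) \<cdot>\<^sub>m A) * Mmat r sj tj fj gj"
    using part1[OF P0c Q0c R0c S0c] part2 Q0v P0c Q0c R0c by blast
  have detS: "det (((-1) ^ tj * sj ti) \<cdot>\<^sub>m A) = (-1) ^ ti * sj ti * h"
  proof -
    have "det (((-1) ^ tj * sj ti) \<cdot>\<^sub>m A) = (e * sj ti) * (e * sj ti) * det A"
      using A unfolding e_def by (simp add: power2_eq_square)
    also have "\<dots> = (e * e) * sj ti * ei * h * (sj ti * u)" unfolding detA ei_def by (simp add: algebra_simps)
    also have "\<dots> = ei * sj ti * h" using ee s_unit by (simp add: algebra_simps)
    finally show ?thesis unfolding ei_def .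
  qed
  have part4: "\<forall>P Q R. P \<in> carrier_mat (r-2) (r-2) \<longrightarrow> Q \<in> carrier_mat (r-2) 2 \<longrightarrow>
          R \<in> carrier_mat 2 (r-2) \<longrightarrow>
          P = delta_mat (r-1) ti * Tprime r si ti * delta'_mat (r-1) tj \<longrightarrow>
          R = Tsecond r fi gi ti * delta'_mat (r-1) tj \<longrightarrow>
          Q * col2 fj gj = ((-1) ^ tj) \<cdot>\<^sub>m (delta_mat (r-1) ti * Tprime r si ti * svec r sj) \<longrightarrow>
          det (((-1) ^ tj * sj ti) \<cdot>\<^sub>m A) = (-1) ^ ti * sj ti * h \<and>
          det (four_block_mat P Q R (((-1) ^ tj * sj ti) \<cdot>\<^sub>m A)) = h"
  proof (intro allI impI conjI)
    fix P Q R :: "'a mat"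
    assume P: "P \<in> carrier_mat (r-2) (r-2)" and Q: "Q \<in> carrier_mat (r-2) 2" and R: "R \<in> carrier_mat 2 (r-2)"
      and PP: "P = delta_mat (r-1) ti * Tprime r si ti * delta'_mat (r-1) tj"
      and RR: "R = Tsecond r fi gi ti * delta'_mat (r-1) tj"
      and QQ: "Q * col2 fj gj = ((-1) ^ tj) \<cdot>\<^sub>m (delta_mat (r-1) ti * Tprime r si ti * svec r sj)"
    show "det (((-1) ^ tj * sj ti) \<cdot>\<^sub>m A) = (-1) ^ ti * sj ti * h" by (rule detS)
    define S where "S = ((-1) ^ tj * sj ti) \<cdot>\<^sub>m A"
    have Sc: "S \<in> carrier_mat 2 2" unfolding S_def using A by simp
    have Sent: "\<And>i j. i < 2 \<Longrightarrow> j < 2 \<Longrightarrow> S $$ (i,j) = e * sj ti * A $$ (i,j)"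
      unfolding S_def e_def using A by auto
    have Qrow: "\<And>a. a < r - 2 \<Longrightarrow> Q $$ (a,0) * fj + Q $$ (a,1) * gj = Vf a"
      using QQ unfolding V0 col2_mult[OF Q] mat_eq_iff' by simp
    have ZF: "four_block_mat P Q R S = Fm (r-1) p q \<alpha>1 (\<lambda>i j. Q $$ (i,j)) (\<lambda>i j. S $$ (i,j)) fi gi"
    proof (rule eq_matI)
      fix a k assume a: "a < dim_row (Fm (r-1) p q \<alpha>1 (\<lambda>i j. Q $$ (i,j)) (\<lambda>i j. S $$ (i,j)) fi gi)"
        and k: "k < dim_col (Fm (r-1) p q \<alpha>1 (\<lambda>i j. Q $$ (i,j)) (\<lambda>i j. S $$ (i,j)) fi gi)"
      have a': "a < r" and k': "k < r" using a k r by (auto simp: Fm_def)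
      have rr: "r - 1 - 1 = r - 2" by simp
      show "four_block_mat P Q R S $$ (a,k) = Fm (r-1) p q \<alpha>1 (\<lambda>i j. Q $$ (i,j)) (\<lambda>i j. S $$ (i,j)) fi gi $$ (a,k)"
        using a' k' P Q R Sc r unfolding PP RR P0 R0
        by (subst index_mat_four_block) (auto simp: Fm_def rr Suc_diff_Suc)
    qed (use P Sc r in \<open>auto simp: Fm_def\<close>)
    have detZ: "det (four_block_mat P Q R S) = (if p = q then S $$ (0,0) * S $$ (1,1) - S $$ (0,1) * S $$ (1,0)
     else (-1)^(p+q+1) * D3 (\<alpha>1 q) (Q $$ (dl p q, 0)) (Q $$ (dl p q, 1)) fi gi (\<lambda>i j. S $$ (i,j)))"
      unfolding ZF by (rule Fm_det[OF pn])
    show "det (four_block_mat P Q R (((-1) ^ tj * sj ti) \<cdot>\<^sub>m A)) = h"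
      unfolding S_def[symmetric] detZ
    proof (cases "p = q")
      case True
      then have tt: "ti = tj" using tiq by simp
      have "S $$ (0,0) * S $$ (1,1) - S $$ (0,1) * S $$ (1,0) = det S" using det2[OF Sc] by simp
      also have "\<dots> = (-1) ^ ti * sj ti * h" unfolding S_def by (rule detS)
      also have "\<dots> = h" using tt e_j eiei unfolding ei_def by (simp add: mult.assoc[symmetric])
      finally show "(if p = q then S $$ (0,0) * S $$ (1,1) - S $$ (0,1) * S $$ (1,0)
     else (-1)^(p+q+1) * D3 (\<alpha>1 q) (Q $$ (dl p q, 0)) (Q $$ (dl p q, 1)) fi gi (\<lambda>i j. S $$ (i,j))) = h"
        using True by simp
    next
      case False
      have a0: "dl p q < r - 2" using dl_bound[OF pn(2) False[symmetric] pn(1)] .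
      have skq: "sk p (dl p q) = q" using sk_dl False by auto
      have Vq: "Vf (dl p q) = 1 - e * ei * si tj * sj ti"
      proof -
        have "(\<Sum>m<r-1. Tf p \<alpha>1 q m * sj (Suc m)) = (\<Sum>k<r-1-1. Tf p \<alpha>1 q (sk p k) * sj (Suc (sk p k))) + Tf p \<alpha>1 q p * sj (Suc p)"
          by (rule sum_split_sk[OF pn(1)])
        also have "(\<Sum>k<r-1-1. Tf p \<alpha>1 q (sk p k) * sj (Suc (sk p k))) = (\<Sum>k<r-1-1. (if k = dl p q then 1 else 0) * sj (Suc (sk p k)))"
          using False by (intro sum.cong) (auto simp: Tf_def sk_ne sk_eq_iff eq_commute[of q])
        also have "\<dots> = sj (Suc (sk p (dl p q)))"
          by (rule sum_single) (use a0 in \<open>auto simp: numeral_2_eq_2 diff_diff_add\<close>)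
        also have "Tf p \<alpha>1 q p = \<alpha>1 q" using False unfolding Tf_def by simp
        finally have "(\<Sum>m<r-1. Tf p \<alpha>1 q m * sj (Suc m)) = e - ei * si tj * sj ti"
          unfolding skq \<alpha>1_def ei_def tiq e_sj2 by (simp add: algebra_simps)
        then have "Vf (dl p q) = e * (e - ei * si tj * sj ti)" unfolding Vf_def skq by simp
        also have "\<dots> = (e * e) - e * ei * si tj * sj ti" by (simp add: algebra_simps)
        finally show ?thesis using ee by simp
      qed
      have Aent: "fi = A $$ (0,0) * fj + A $$ (0,1) * gj" "gi = A $$ (1,0) * fj + A $$ (1,1) * gj"
      proof -
        have "col2 fi gi $$ (0,0) = (A * col2 fj gj) $$ (0,0)" "col2 fi gi $$ (1,0) = (A * col2 fj gj) $$ (1,0)"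
          using A_rel by simp_all
        then show "fi = A $$ (0,0) * fj + A $$ (0,1) * gj" "gi = A $$ (1,0) * fj + A $$ (1,1) * gj"
          using A unfolding col2_mult[OF A] by (auto simp: col2_def)
      qed
      have dA: "A $$ (0,0) * A $$ (1,1) - A $$ (0,1) * A $$ (1,0) = ei * h * u"
        using det2[OF A] detA unfolding ei_def by simp
      have D3eq: "D3 (\<alpha>1 q) (Q $$ (dl p q, 0)) (Q $$ (dl p q, 1)) fi gi (\<lambda>i j. S $$ (i,j))
          = D3 (-(ei * si tj)) (Q $$ (dl p q, 0)) (Q $$ (dl p q, 1)) fi gi (\<lambda>i j. e * sj ti * A $$ (i,j))"
        unfolding D3_def using Sent by (simp add: \<alpha>1_def ei_def tiq)
      have "D3 (-(ei * si tj)) (Q $$ (dl p q, 0)) (Q $$ (dl p q, 1)) fi gi (\<lambda>i j. e * sj ti * (\<lambda>i j. A $$ (i,j)) i j) = - (e * ei * h)"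
        by (rule D3_id[OF s_unit _ Aent dA]) (use Qrow[OF a0] Vq in simp)
      then have D3v: "D3 (\<alpha>1 q) (Q $$ (dl p q, 0)) (Q $$ (dl p q, 1)) fi gi (\<lambda>i j. S $$ (i,j)) = - (e * ei * h)"
        unfolding D3eq by simp
      have sgn: "(-1::'a)^(p+q+1) = - (e * ei)"
      proof -
        have "(-1::'a)^(p+q+1) * (-1) = (-1)^(Suc p + Suc q)" by (simp add: algebra_simps)
        then have "(-1::'a)^(p+q+1) * (-1) = e * ei" unfolding tiq e_def ei_def by (simp add: power_add mult.commute)
        then show ?thesis by (metis minus_minus mult_minus1_right)
      qed
      show "(if p = q then S $$ (0,0) * S $$ (1,1) - S $$ (0,1) * S $$ (1,0)
     else (-1)^(p+q+1) * D3 (\<alpha>1 q) (Q $$ (dl p q, 0)) (Q $$ (dl p q, 1)) fi gi (\<lambda>i j. S $$ (i,j))) = h"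
        using False unfolding D3v sgn
      proof -
        have "- (e * ei) * - (e * ei * h) = (e * e) * (ei * ei) * h" by (simp add: algebra_simps)
        then show "(if p = q then S $$ (0,0) * S $$ (1,1) - S $$ (0,1) * S $$ (1,0) else - (e * ei) * - (e * ei * h)) = h"
          using False ee eiei by simp
      qed
    qed
  qed
  show ?thesis using part1 part2 part3 part4 by blast
qed

end
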